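(* For every integer $k\ge 2$, \[u(2^k-1-k,\;2^k-1)=\varepsilon(2^k-1-k,\;2^k-1)=2^{k-1}.\]
   Context: All matrices are binary (entries in $\{0,1\}$). For a nonempty set $S$ of columns of a binary matrix, let $z$ be the sum over the integers of the columns in $S$. $S$ is called $1$-free if no entry of $z$ equals $1$, and even if all entries of $z$ are even. For a binary $m\times n$ matrix $A$ with $m<n$: $\varepsilon(A)$ is the smallest cardinality of a nonempty even set of columns of $A$ (the minimum distance of the code $\{x\in\mathbb F_2^n: Ax=0\}$), and $u(A)$ (the stopping distance) is the smallest cardinality of a nonempty $1$-free set of columns of $A$. For $m<n$, $\varepsilon(m,n)$ and $u(m,n)$ denote the maxima of $\varepsilon(A)$, resp. $u(A)$, over all binary $m\times n$ matrices $A$. *)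

theory Defs
  imports Main
begin

text \<open>A binary m x n matrix is represented as A :: nat => nat => nat, with
  A i j (row i < m, column j < n) in {0,1}; entries outside the range are irrelevant.\<close>

definition binary_matrix :: "nat \<Rightarrow> nat \<Rightarrow> (nat \<Rightarrow> nat \<Rightarrow> nat) \<Rightarrow> bool" where
  "binary_matrix m n A \<longleftrightarrow> (\<forall>i<m. \<forall>j<n. A i j \<in> {0,1})"

definition even_colset :: "nat \<Rightarrow> nat \<Rightarrow> (nat \<Rightarrow> nat \<Rightarrow> nat) \<Rightarrow> nat set \<Rightarrow> bool" where
  "even_colset m n A S \<longleftrightarrow> S \<subseteq> {..<n} \<and> S \<noteq> {} \<and> (\<forall>i<m. even (\<Sum>j\<in>S. A i j))"

definition onefree_colset :: "nat \<Rightarrow> nat \<Rightarrow> (nat \<Rightarrow> nat \<Rightarrow> nat) \<Rightarrow> nat set \<Rightarrow> bool" where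
  "onefree_colset m n A S \<longleftrightarrow> S \<subseteq> {..<n} \<and> S \<noteq> {} \<and> (\<forall>i<m. (\<Sum>j\<in>S. A i j) \<noteq> 1)"

definition eps_mat :: "nat \<Rightarrow> nat \<Rightarrow> (nat \<Rightarrow> nat \<Rightarrow> nat) \<Rightarrow> nat" where
  "eps_mat m n A = Min {card S | S. even_colset m n A S}"

definition u_mat :: "nat \<Rightarrow> nat \<Rightarrow> (nat \<Rightarrow> nat \<Rightarrow> nat) \<Rightarrow> nat" where
  "u_mat m n A = Min {card S | S. onefree_colset m n A S}"

definition eps_max :: "nat \<Rightarrow> nat \<Rightarrow> nat" where
  "eps_max m n = Max {eps_mat m n A | A. binary_matrix m n A}"

definition u_max :: "nat \<Rightarrow> nat \<Rightarrow> nat" where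
  "u_max m n = Max {u_mat m n A | A. binary_matrix m n A}"

end

theory Submission imports Defs begin

definition sig :: "nat \<Rightarrow> (nat \<Rightarrow> nat \<Rightarrow> nat) \<Rightarrow> nat set \<Rightarrow> nat set" where
 "sig m A S = {i. i<m \<and> odd (\<Sum>j\<in>S. A i j)}"

definition sd :: "nat set \<Rightarrow> nat set \<Rightarrow> nat set" where "sd S T = (S - T) \<union> (T - S)"

definition C0 :: "nat \<Rightarrow> nat \<Rightarrow> (nat \<Rightarrow> nat \<Rightarrow> nat) \<Rightarrow> nat set set" where
 "C0 m n A = {S. S \<subseteq> {..<n} \<and> sig m A S = {}}"

lemma sum_sd: fixes f :: "nat \<Rightarrow> nat" assumes "finite S" "finite T"
  shows "sum f S + sum f T = sum f (sd S T) + 2 * sum f (S \<inter> T)"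
proof -
  have 1: "sum f S = sum f (S \<inter> T) + sum f (S - T)" using sum.Int_Diff[OF assms(1)] .
  have 2: "sum f T = sum f (T \<inter> S) + sum f (T - S)" using sum.Int_Diff[OF assms(2)] .
  have 3: "sum f (sd S T) = sum f (S - T) + sum f (T - S)" unfolding sd_def
    by (rule sum.union_disjoint) (use assms in auto)
  show ?thesis using 1 2 3 by (simp add: Int_commute)
qed

lemma odd_sd: fixes f :: "nat \<Rightarrow> nat" shows "finite S \<Longrightarrow> finite T \<Longrightarrow> odd (sum f (sd S T)) \<longleftrightarrow> (odd (sum f S) \<noteq> odd (sum f T))"
proof -
  assume a: "finite S" "finite T"
  have "even (sum f S + sum f T) = even (sum f (sd S T))" using sum_sd[OF a, of f] by simp
  then show ?thesis by auto
qed

lemma sig_sd: assumes "finite S" "finite T" shows "sig m A (sd S T) = sd (sig m A S) (sig m A T)"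
proof -
  have "i \<in> sig m A (sd S T) \<longleftrightarrow> i \<in> sd (sig m A S) (sig m A T)" for i
  proof -
    have "i \<in> sig m A (sd S T) \<longleftrightarrow> i < m \<and> (odd (\<Sum>j\<in>S. A i j) \<noteq> odd (\<Sum>j\<in>T. A i j))"
      unfolding sig_def using odd_sd[OF assms, of "A i"] by simp
    also have "\<dots> \<longleftrightarrow> i \<in> sd (sig m A S) (sig m A T)" unfolding sd_def sig_def by blast
    finally show ?thesis .
  qed
  then show ?thesis by blast
qed

lemma sd_sd: "sd (sd S T) T = S" by (auto simp: sd_def)
lemma sd_self: "sd S S = {}" by (auto simp: sd_def)
lemma sd_sub: "S \<subseteq> X \<Longrightarrow> T \<subseteq> X \<Longrightarrow> sd S T \<subseteq> X" by (auto simp: sd_def)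

lemma C0_fin: "finite (C0 m n A)"
  by (rule finite_subset[of _ "Pow {..<n}"]) (auto simp: C0_def)

lemma sd_C0: "S \<in> C0 m n A \<Longrightarrow> T \<in> C0 m n A \<Longrightarrow> sd S T \<in> C0 m n A"
  unfolding C0_def using sig_sd[of S T m A] finite_subset[of _ "{..<n}"]
  by (auto simp: sd_sub sd_self)

lemma fiber_le: "card {S. S \<subseteq> {..<n} \<and> sig m A S = y} \<le> card (C0 m n A)"
proof (cases "{S. S \<subseteq> {..<n} \<and> sig m A S = y} = {}")
  case True then show ?thesis by (simp only: True card.empty)
next
  case False
  then obtain T where T: "T \<subseteq> {..<n}" "sig m A T = y" by auto
  have "inj_on (\<lambda>S. sd S T) {S. S \<subseteq> {..<n} \<and> sig m A S = y}"
    by (rule inj_onI) (metis sd_sd)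
  moreover have "(\<lambda>S. sd S T) ` {S. S \<subseteq> {..<n} \<and> sig m A S = y} \<subseteq> C0 m n A"
  proof
    fix X assume "X \<in> (\<lambda>S. sd S T) ` {S. S \<subseteq> {..<n} \<and> sig m A S = y}"
    then obtain S where S: "S \<subseteq> {..<n}" "sig m A S = y" "X = sd S T" by auto
    have fS: "finite S" using S(1) finite_subset by blast
    have fT: "finite T" using T(1) finite_subset by blast
    have "sig m A X = sd (sig m A S) (sig m A T)" using sig_sd[OF fS fT] S(3) by simp
    hence "sig m A X = {}" by (simp add: S(2) T(2) sd_self)
    moreover have "X \<subseteq> {..<n}" using S T sd_sub by auto
    ultimately show "X \<in> C0 m n A" by (auto simp: C0_def)
  qed
  ultimately show ?thesis by (rule card_inj_on_le[OF _ _ C0_fin])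
qed

lemma card_C0: "2^n \<le> 2^m * card (C0 m n A)"
proof -
  let ?U = "\<Union>y\<in>Pow {..<m}. {S. S \<subseteq> {..<n} \<and> sig m A S = y}"
  have sub: "Pow {..<n} \<subseteq> ?U"
  proof
    fix S assume "S \<in> Pow {..<n}"
    moreover have "sig m A S \<in> Pow {..<m}" unfolding sig_def by blast
    ultimately show "S \<in> ?U" by blast
  qed
  have finU: "finite ?U" by (rule finite_subset[of _ "Pow {..<n}"]) blast+
  have "card (Pow {..<n::nat}) \<le> card ?U" by (rule card_mono[OF finU sub])
  also have "\<dots> \<le> (\<Sum>y\<in>Pow {..<m}. card {S. S \<subseteq> {..<n} \<and> sig m A S = y})"
    by (rule card_UN_le) simp
  also have "\<dots> \<le> (\<Sum>y\<in>Pow {..<m::nat}. card (C0 m n A))"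
    by (rule sum_mono) (rule fiber_le)
  also have "\<dots> = 2^m * card (C0 m n A)" by (simp add: card_Pow)
  finally show ?thesis by (simp add: card_Pow)
qed

lemma half: "2 * card {S \<in> C0 m n A. j \<in> S} \<le> card (C0 m n A)"
proof (cases "{S \<in> C0 m n A. j \<in> S} = {}")
  case True then show ?thesis by (simp only: True card.empty)
next
  case False
  then obtain T where T: "T \<in> C0 m n A" "j \<in> T" by auto
  let ?P = "{S \<in> C0 m n A. j \<in> S}" and ?Q = "{S \<in> C0 m n A. j \<notin> S}"
  have "inj_on (\<lambda>S. sd S T) ?P" by (rule inj_onI) (metis sd_sd)
  moreover have "(\<lambda>S. sd S T) ` ?P \<subseteq> ?Q"
  proof
    fix X assume "X \<in> (\<lambda>S. sd S T) ` ?P"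
    then obtain S where S: "S \<in> C0 m n A" "j \<in> S" "X = sd S T" by blast
    have "X \<in> C0 m n A" using sd_C0[OF S(1) T(1)] S(3) by simp
    moreover have "j \<notin> X" using S(2,3) T(2) unfolding sd_def by blast
    ultimately show "X \<in> ?Q" by blast
  qed
  moreover have "finite ?Q" using C0_fin by auto
  ultimately have 1: "card ?P \<le> card ?Q" by (rule card_inj_on_le)
  have "card ?P + card ?Q = card (?P \<union> ?Q)"
    by (rule card_Un_disjoint[symmetric]) (use C0_fin in auto)
  also have "?P \<union> ?Q = C0 m n A" by auto
  finally show ?thesis using 1 by simp
qed

lemma weight_sum: "2 * (\<Sum>S\<in>C0 m n A. card S) \<le> n * card (C0 m n A)"
proof -
  have "(\<Sum>S\<in>C0 m n A. card S) = (\<Sum>S\<in>C0 m n A. \<Sum>j<n. if j \<in> S then 1 else 0)"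
  proof (rule sum.cong[OF refl])
    fix S assume "S \<in> C0 m n A"
    hence "S = {j\<in>{..<n}. j \<in> S}" by (auto simp: C0_def)
    hence "card S = card {j\<in>{..<n}. j \<in> S}" by simp
    also have "\<dots> = (\<Sum>j<n. if j \<in> S then 1 else 0)"
      by (simp add: sum.inter_filter[symmetric])
    finally show "card S = (\<Sum>j<n. if j \<in> S then 1 else 0)" .
  qed
  also have "\<dots> = (\<Sum>j<n. \<Sum>S\<in>C0 m n A. if j \<in> S then 1 else 0)" by (rule sum.swap)
  also have "\<dots> = (\<Sum>j<n. card {S \<in> C0 m n A. j \<in> S})"
    by (simp add: sum.inter_filter[symmetric] C0_fin)
  finally have "2 * (\<Sum>S\<in>C0 m n A. card S) = (\<Sum>j<n. 2 * card {S \<in> C0 m n A. j \<in> S})"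
    by (simp add: sum_distrib_left)
  also have "\<dots> \<le> (\<Sum>j<n. card (C0 m n A))" by (rule sum_mono) (rule half)
  finally show ?thesis by simp
qed

lemma arith1: fixes d N M :: nat assumes "N \<ge> M" "M \<ge> 2" "2*d*(N-1) \<le> (M-1)*N" shows "2*d \<le> M"
proof (rule ccontr)
  assume "\<not> 2*d \<le> M"
  hence "(M+1)*(N-1) \<le> 2*d*(N-1)" by (intro mult_le_mono1) simp
  with assms have h: "(M+1)*(N-1) \<le> (M-1)*N" by linarith
  obtain N' where N: "N = Suc N'" using assms by (cases N) auto
  obtain M' where M: "M = Suc M'" using assms by (cases M) auto
  from h have "M'*N' + 2*N' \<le> M'*N' + M'" unfolding N M by (simp add: algebra_simps)
  with assms N M show False by linarith
qed

lemma even_iff: "even_colset m n A S \<longleftrightarrow> S \<in> C0 m n A \<and> S \<noteq> {}"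
  unfolding even_colset_def C0_def sig_def by blast

lemma upper:
  assumes "k \<ge> 2" "m = 2^k-1-k" "n = 2^k-1"
  shows "eps_mat m n A \<le> 2^(k-1)" "u_mat m n A \<le> eps_mat m n A"
    "finite {card S | S. onefree_colset m n A S}" "{card S | S. onefree_colset m n A S} \<noteq> {}"
proof -
  have kl: "k < 2^k" by (rule less_exp)
  have nm: "n = m + k" using assms kl by linarith
  define N where "N = card (C0 m n A)"
  have "2^m * 2^k \<le> 2^m * N" using card_C0[of n m A] unfolding N_def nm by (simp add: power_add)
  hence N1: "2^k \<le> N" by simp
  have k4: "(4::nat) \<le> 2^k" using power_increasing[OF assms(1), of "2::nat"] by simp
  have emp: "{} \<in> C0 m n A" by (simp add: C0_def sig_def)
  obtain S0 where S0: "S0 \<in> C0 m n A" "S0 \<noteq> {}"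
  proof -
    have "\<not> C0 m n A \<subseteq> {{}}"
    proof
      assume "C0 m n A \<subseteq> {{}}"
      hence "N \<le> 1" unfolding N_def using card_mono[of "{{}}" "C0 m n A"] by simp
      with N1 k4 show False by simp
    qed
    thus ?thesis using that by blast
  qed
  define E where "E = {card S | S. even_colset m n A S}"
  define Of where "Of = {card S | S. onefree_colset m n A S}"
  have finO: "finite Of"
    by (rule finite_subset[of _ "card ` Pow {..<n}"]) (auto simp: Of_def onefree_colset_def)
  have EO: "E \<subseteq> Of"
  proof
    fix x assume "x \<in> E"
    then obtain S where S: "x = card S" "even_colset m n A S" unfolding E_def by blast
    have "onefree_colset m n A S" using S(2) unfolding even_colset_def onefree_colset_def
      by (metis odd_one)
    thus "x \<in> Of" using S(1) unfolding Of_def by blast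
  qed
  have finE: "finite E" using finite_subset[OF EO finO] .
  have neE: "E \<noteq> {}" using S0 even_iff[of m n A S0] unfolding E_def by blast
  show "finite {card S | S. onefree_colset m n A S}" using finO unfolding Of_def .
  show "{card S | S. onefree_colset m n A S} \<noteq> {}" using EO neE unfolding Of_def by blast
  show "u_mat m n A \<le> eps_mat m n A" unfolding u_mat_def eps_mat_def E_def[symmetric] Of_def[symmetric]
    by (rule Min_antimono[OF EO neE finO])
  define d where "d = eps_mat m n A"
  have dle: "d \<le> card S" if "S \<in> C0 m n A" "S \<noteq> {}" for S
  proof -
    have "card S \<in> E" using that even_iff[of m n A S] unfolding E_def by blast
    thus ?thesis unfolding d_def eps_mat_def E_def[symmetric] using Min_le[OF finE] by blast
  qed
  have "d * (N - 1) = (\<Sum>S\<in>C0 m n A - {{}}. d)" using emp C0_fin unfolding N_def by simp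
  also have "\<dots> \<le> (\<Sum>S\<in>C0 m n A - {{}}. card S)" by (rule sum_mono) (use dle in blast)
  also have "\<dots> = (\<Sum>S\<in>C0 m n A. card S)" using sum.remove[OF C0_fin emp, of card] by simp
  finally have "2 * d * (N - 1) \<le> 2 * (\<Sum>S\<in>C0 m n A. card S)" by simp
  also have "\<dots> \<le> n * N" unfolding N_def by (rule weight_sum)
  finally have "2 * d * (N - 1) \<le> (2^k - 1) * N" using assms(3) by simp
  from arith1[OF N1 _ this] k4 have "2 * d \<le> 2^k" by simp
  moreover have "(2::nat)^k = 2 * 2^(k-1)" using assms(1) by (simp add: power_eq_if)
  ultimately show "eps_mat m n A \<le> 2^(k-1)" unfolding d_def by simp
qed

lemma comb:
  "T \<subseteq> {1..<2^k} \<Longrightarrow> T \<noteq> {} \<Longrightarrow>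
   (\<forall>j<k. \<forall>w. 1 \<le> w \<longrightarrow> w < 2^j \<longrightarrow> card (T \<inter> {w, 2^j, w + 2^j}) \<noteq> 1)
   \<Longrightarrow> 2^k \<le> 2 * card (T::nat set)"
proof (induction k arbitrary: T)
  case 0 then show ?case by auto
next
  case (Suc k)
  define H :: nat where "H = 2^k"
  have H1: "1 \<le> H" unfolding H_def by simp
  have fin: "finite T" using Suc.prems(1) finite_subset by blast
  have TH: "T \<subseteq> {1..<2*H}" using Suc.prems(1) unfolding H_def by simp
  have cons: "card (T \<inter> {w, H, w + H}) \<noteq> 1" if "1 \<le> w" "w < H" for w
    using Suc.prems(3) that unfolding H_def by blast
  show ?case
  proof (cases "H \<in> T")
    case True
    have cov: "w \<in> T \<or> w + H \<in> T" if "1 \<le> w" "w < H" for w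
    proof (rule ccontr)
      assume "\<not> (w \<in> T \<or> w + H \<in> T)"
      then have "T \<inter> {w, H, w + H} = {H}" using True by auto
      then show False using cons[OF that] by simp
    qed
    define f where "f w = (if w \<in> T then w else w + H)" for w
    have "inj_on f {1..<H}" by (rule inj_onI) (auto simp: f_def split: if_splits)
    moreover have "f ` {1..<H} \<subseteq> T - {H}"
    proof
      fix x assume "x \<in> f ` {1..<H}"
      then obtain w where w: "1 \<le> w" "w < H" "x = f w" by auto
      show "x \<in> T - {H}"
      proof (cases "w \<in> T")
        case True thus ?thesis using w by (simp add: f_def)
      next
        case False thus ?thesis using w cov[OF w(1,2)] by (simp add: f_def)
      qed
    qed
    moreover have "finite (T - {H})" using fin by simp
    ultimately have "card {1..<H} \<le> card (T - {H})" by (rule card_inj_on_le)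
    hence "H - 1 \<le> card T - 1" using True fin by simp
    moreover have "card T > 0" using True fin by (auto simp: card_gt_0_iff)
    ultimately have "H \<le> card T" using H1 by linarith
    then show ?thesis unfolding H_def by simp
  next
    case False
    have eqv: "w \<in> T \<longleftrightarrow> w + H \<in> T" if "1 \<le> w" "w < H" for w
    proof
      assume a: "w \<in> T"
      show "w + H \<in> T"
      proof (rule ccontr)
        assume "w + H \<notin> T"
        hence "T \<inter> {w, H, w + H} = {w}" using a False by auto
        thus False using cons[OF that] by simp
      qed
    next
      assume a: "w + H \<in> T"
      show "w \<in> T"
      proof (rule ccontr)
        assume "w \<notin> T"
        hence "T \<inter> {w, H, w + H} = {w + H}" using a False by auto
        thus False using cons[OF that] by simp
      qed
    qed
    define T0 where "T0 = T \<inter> {1..<H}"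
    have split: "T = T0 \<union> (\<lambda>x. x + H) ` T0"
    proof
      show "T \<subseteq> T0 \<union> (\<lambda>x. x + H) ` T0"
      proof
        fix x assume x: "x \<in> T"
        have x1: "1 \<le> x" "x < 2*H" using x TH by auto
        show "x \<in> T0 \<union> (\<lambda>x. x + H) ` T0"
        proof (cases "x < H")
          case True thus ?thesis using x x1 unfolding T0_def by auto
        next
          case c: False
          with x False have "x > H" by (cases "x = H") auto
          hence xr: "1 \<le> x - H" "x - H < H" using x1 by auto
          hence "x - H \<in> T" using eqv[OF xr] x \<open>x > H\<close> by simp
          moreover have "x = (x - H) + H" using \<open>x > H\<close> by simp
          ultimately have "x - H \<in> T0" unfolding T0_def using x1 \<open>x > H\<close> by auto
          hence "x \<in> (\<lambda>x. x + H) ` T0" by (rule rev_image_eqI) (use \<open>x > H\<close> in simp)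
          thus ?thesis by blast
        qed
      qed
    next
      show "T0 \<union> (\<lambda>x. x + H) ` T0 \<subseteq> T"
      proof
        fix x assume "x \<in> T0 \<union> (\<lambda>x. x + H) ` T0"
        then consider "x \<in> T0" | y where "y \<in> T0" "x = y + H" by blast
        then show "x \<in> T"
        proof cases
          case 1 thus ?thesis unfolding T0_def by blast
        next
          case 2
          hence "y \<in> T" "1 \<le> y" "y < H" unfolding T0_def by auto
          thus ?thesis using eqv[of y] 2(2) by blast
        qed
      qed
    qed
    have finT0: "finite T0" unfolding T0_def by simp
    have disj: "T0 \<inter> (\<lambda>x. x + H) ` T0 = {}" unfolding T0_def by auto
    have "card T = card T0 + card ((\<lambda>x. x + H) ` T0)"
      by (subst split) (rule card_Un_disjoint[OF finT0 _ disj], simp add: finT0)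
    also have "card ((\<lambda>x. x + H) ` T0) = card T0" by (rule card_image) (simp add: inj_on_def)
    finally have cT: "card T = 2 * card T0" by simp
    have ne: "T0 \<noteq> {}"
    proof
      assume "T0 = {}"
      hence "T = {}" using split by simp
      thus False using Suc.prems(2) by simp
    qed
    have sub0: "T0 \<subseteq> {1..<2^k}" unfolding T0_def H_def by auto
    have c0: "\<forall>j<k. \<forall>w. 1 \<le> w \<longrightarrow> w < 2^j \<longrightarrow> card (T0 \<inter> {w, 2^j, w + 2^j}) \<noteq> 1"
    proof (intro allI impI)
      fix j w assume j: "j < k" and w: "1 \<le> w" "w < (2::nat)^j"
      have "(2::nat)^(Suc j) \<le> 2^k" using j by (intro power_increasing) auto
      hence "w + 2^j < H" using w unfolding H_def by simp
      hence "T0 \<inter> {w, 2^j, w + 2^j} = T \<inter> {w, 2^j, w + 2^j}" using w unfolding T0_def by auto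
      moreover have "card (T \<inter> {w, 2^j, w + 2^j}) \<noteq> 1" using Suc.prems(3)[rule_format, of j w] j w by simp
      ultimately show "card (T0 \<inter> {w, 2^j, w + 2^j}) \<noteq> 1" by simp
    qed
    have "2^k \<le> 2 * card T0" by (rule Suc.IH[OF sub0 ne c0])
    thus ?thesis using cT by simp
  qed
qed

definition lin :: "nat \<times> nat \<Rightarrow> nat set" where "lin p = {snd p, 2^fst p, snd p + 2^fst p}"
definition D :: "nat \<Rightarrow> (nat \<times> nat) set" where "D k = Sigma {..<k} (\<lambda>j. {1..<2^j})"

lemma sum_pow: "(\<Sum>j<k. (2::nat)^j - 1) + k + 1 = 2^k"
proof (induction k)
  case 0 then show ?case by simp
next
  case (Suc k)
  have "(1::nat) \<le> 2^k" by simp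
  with Suc show ?case by simp
qed

lemma card_D: "card (D k) = 2^k - 1 - k"
proof -
  have "card (D k) = (\<Sum>j<k. (2::nat)^j - 1)" unfolding D_def by simp
  with sum_pow[of k] show ?thesis by linarith
qed

lemma lower:
  assumes "m = 2^k-1-k" "n = 2^k-1"
  shows "\<exists>A. binary_matrix m n A \<and> (\<forall>S. onefree_colset m n A S \<longrightarrow> 2^k \<le> 2 * card S)"
proof -
  have "finite (D k)" unfolding D_def by simp
  then obtain h where h: "bij_betw h {0..<card (D k)} (D k)" using ex_bij_betw_nat_finite by blast
  define A :: "nat \<Rightarrow> nat \<Rightarrow> nat" where "A i c = (if Suc c \<in> lin (h i) then 1 else 0)" for i c
  have bin: "binary_matrix m n A" by (simp add: binary_matrix_def A_def)
  have "2^k \<le> 2 * card S" if S: "onefree_colset m n A S" for S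
  proof -
    have S1: "S \<subseteq> {..<n}" "S \<noteq> {}" "\<forall>i<m. (\<Sum>j\<in>S. A i j) \<noteq> 1"
      using S unfolding onefree_colset_def by auto
    have finS: "finite S" using S1(1) finite_subset by blast
    define T where "T = Suc ` S"
    have cT: "card T = card S" unfolding T_def by (rule card_image) simp
    have sub: "T \<subseteq> {1..<2^k}" using S1(1) assms(2) unfolding T_def by auto
    have ne: "T \<noteq> {}" using S1(2) unfolding T_def by simp
    have c: "\<forall>j<k. \<forall>w. 1 \<le> w \<longrightarrow> w < 2^j \<longrightarrow> card (T \<inter> {w, 2^j, w + 2^j}) \<noteq> 1"
    proof (intro allI impI)
      fix j w assume j: "j < k" and w: "1 \<le> w" "w < (2::nat)^j"
      have "(j, w) \<in> D k" using j w unfolding D_def by simp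
      then obtain i where i: "i < card (D k)" "h i = (j, w)" using h unfolding bij_betw_def by force
      have im: "i < m" using i(1) card_D[of k] assms(1) by simp
      have "(\<Sum>c\<in>S. A i c) = card {c\<in>S. Suc c \<in> {w, 2^j, w + 2^j}}"
        unfolding A_def lin_def using i(2) finS by (simp add: sum.inter_filter[symmetric])
      also have "{c\<in>S. Suc c \<in> {w, 2^j, w + 2^j}} = {c\<in>S. Suc c \<in> T \<inter> {w, 2^j, w + 2^j}}"
        unfolding T_def by auto
      also have "card \<dots> = card (Suc ` {c\<in>S. Suc c \<in> T \<inter> {w, 2^j, w + 2^j}})"
        by (rule card_image[symmetric]) simp
      also have "Suc ` {c\<in>S. Suc c \<in> T \<inter> {w, 2^j, w + 2^j}} = T \<inter> {w, 2^j, w + 2^j}"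
        unfolding T_def by auto
      finally have eq: "(\<Sum>c\<in>S. A i c) = card (T \<inter> {w, 2^j, w + 2^j})" .
      show "card (T \<inter> {w, 2^j, w + 2^j}) \<noteq> 1" using eq S1(3) im by metis
    qed
    show ?thesis using comb[OF sub ne c] cT by simp
  qed
  with bin show ?thesis by blast
qed

theorem theorem6p1:
  fixes k :: nat
  assumes "k \<ge> 2"
  shows "u_max (2^k - 1 - k) (2^k - 1) = eps_max (2^k - 1 - k) (2^k - 1)
         \<and> eps_max (2^k - 1 - k) (2^k - 1) = 2^(k - 1)"
proof -
  define m where "m = (2::nat)^k - 1 - k"
  define n where "n = (2::nat)^k - 1"
  have up: "eps_mat m n A \<le> 2^(k-1)" "u_mat m n A \<le> eps_mat m n A"
    "finite {card S | S. onefree_colset m n A S}" "{card S | S. onefree_colset m n A S} \<noteq> {}" for A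
    using upper[OF assms m_def n_def] by blast+
  obtain A0 where A0: "binary_matrix m n A0" "\<forall>S. onefree_colset m n A0 S \<longrightarrow> 2^k \<le> 2 * card S"
    using lower[OF m_def n_def] by blast
  have kk: "(2::nat)^k = 2 * 2^(k-1)" using assms by (simp add: power_eq_if)
  have uA0: "2^(k-1) \<le> u_mat m n A0"
    unfolding u_mat_def using up(3,4)[of A0] A0(2) kk by auto
  have eA0: "2^(k-1) \<le> eps_mat m n A0" using uA0 up(2)[of A0] by linarith
  define Ev where "Ev = {eps_mat m n A | A. binary_matrix m n A}"
  define Uv where "Uv = {u_mat m n A | A. binary_matrix m n A}"
  have "Ev \<subseteq> {..2^(k-1)}" unfolding Ev_def using up(1) by blast
  hence finEv: "finite Ev" by (rule finite_subset) simp
  have "Uv \<subseteq> {..2^(k-1)}" unfolding Uv_def using order_trans[OF up(2) up(1)] by blast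
  hence finUv: "finite Uv" by (rule finite_subset) simp
  have e: "eps_max m n = 2^(k-1)"
  proof (rule antisym)
    show "eps_max m n \<le> 2^(k-1)" unfolding eps_max_def Ev_def[symmetric]
    proof (rule Max.boundedI[OF finEv])
      show "Ev \<noteq> {}" using A0(1) unfolding Ev_def by blast
      fix a assume "a \<in> Ev" thus "a \<le> 2^(k-1)" unfolding Ev_def using up(1) by blast
    qed
    have "eps_mat m n A0 \<in> Ev" using A0(1) unfolding Ev_def by blast
    hence "eps_mat m n A0 \<le> Max Ev" using finEv by simp
    thus "2^(k-1) \<le> eps_max m n" unfolding eps_max_def Ev_def[symmetric] using eA0 by linarith
  qed
  have u: "u_max m n = 2^(k-1)"
  proof (rule antisym)
    show "u_max m n \<le> 2^(k-1)" unfolding u_max_def Uv_def[symmetric]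
    proof (rule Max.boundedI[OF finUv])
      show "Uv \<noteq> {}" using A0(1) unfolding Uv_def by blast
      fix a assume "a \<in> Uv" thus "a \<le> 2^(k-1)" unfolding Uv_def using order_trans[OF up(2) up(1)] by blast
    qed
    have "u_mat m n A0 \<in> Uv" using A0(1) unfolding Uv_def by blast
    hence "u_mat m n A0 \<le> Max Uv" using finUv by simp
    thus "2^(k-1) \<le> u_max m n" unfolding u_max_def Uv_def[symmetric] using uA0 by linarith
  qed
  show ?thesis using e u unfolding m_def n_def by simp
qed

end
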